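(* Let $q\in[0,1)$ and let $\mathfrak M$ be an $N$-dimensional space of $\mathbb C^n$-valued functions analytic in a neighbourhood of the origin which is invariant under $R_q$. Let $F$ be a $\mathbb C^{n\times N}$-valued function whose columns form a basis of $\mathfrak M$, and put $C=F(0)\in\mathbb C^{n\times N}$. Then there exists a matrix $A_q\in\mathbb C^{N\times N}$ such that, for $z$ in a neighbourhood of the origin, \[ F(z)=C\prod_{j=0}^\infty \bigl(I_N-(1-q)zq^jA_q\bigr)^{-1}. \]
   Context: For $q\in(0,1)$, $R_q$ is the $q$-Jackson derivative $(R_qf)(z)=\frac{f(z)-f(qz)}{(1-q)z}$ (extended at $z=0$ by continuity); for $q=0$, $R_0$ is the backward shift $(R_0f)(z)=\frac{f(z)-f(0)}{z}$ for $z\neq0$, $(R_0f)(0)=f'(0)$. The operator acts entrywise on vector/matrix-valued functions. Convention $q^0=1$ (so for $q=0$ the product reduces to $(I_N-zA_q)^{-1}$). All factors of the product commute. *)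

theory Defs
  imports "HOL-Analysis.Analysis"
begin

text \<open>The operator R_q on scalar functions: q-Jackson derivative for q in (0,1),
  backward shift for q = 0; at z = 0 extended by continuity (value f'(0)).\<close>
definition jackson_R :: "real \<Rightarrow> (complex \<Rightarrow> complex) \<Rightarrow> complex \<Rightarrow> complex" where
  "jackson_R q f z =
     (if z = 0 then deriv f 0
      else (f z - f (complex_of_real q * z)) / ((1 - complex_of_real q) * z))"

definition jackson_R_vec :: "real \<Rightarrow> (complex \<Rightarrow> complex ^'n) \<Rightarrow> complex \<Rightarrow> complex ^'n" where
  "jackson_R_vec q f z = (\<chi> i. jackson_R q (\<lambda>w. f w $ i) z)"

fun qprod_partial :: "real \<Rightarrow> complex ^'N^'N \<Rightarrow> complex \<Rightarrow> nat \<Rightarrow> complex ^'N^'N" where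
  "qprod_partial q A z 0 = mat 1"
| "qprod_partial q A z (Suc m) =
     qprod_partial q A z m **
     matrix_inv (mat 1 - mat ((1 - complex_of_real q) * z * complex_of_real q ^ m) ** A)"

end

theory Submission
  imports Defs
begin

definition msum :: "complex^'b^'a \<Rightarrow> real" where
  "msum X = (\<Sum>i\<in>UNIV. \<Sum>j\<in>UNIV. norm (X$i$j))"

definition vsum1 :: "complex^'a \<Rightarrow> real" where
  "vsum1 v = (\<Sum>i\<in>UNIV. norm (v$i))"

lemma msum_nonneg: "msum X \<ge> 0"
  unfolding msum_def by (intro sum_nonneg) auto

lemma vsum1_nonneg: "vsum1 X \<ge> 0"
  unfolding vsum1_def by (intro sum_nonneg) auto

lemma row_le_msum: "(\<Sum>j\<in>UNIV. norm (X$i$j)) \<le> msum X"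
  unfolding msum_def by (rule member_le_sum) (auto intro: sum_nonneg)

lemma entry_le_msum: "norm (X$i$j) \<le> msum X"
proof -
  have "norm (X$i$j) \<le> (\<Sum>j\<in>UNIV. norm (X$i$j))"
    by (rule member_le_sum) auto
  also have "\<dots> \<le> msum X" by (rule row_le_msum)
  finally show ?thesis .
qed

lemma entry_le_vsum1: "norm (v$i) \<le> vsum1 v"
  unfolding vsum1_def by (rule member_le_sum) auto

lemma msum_mult: "msum (X ** Y) \<le> msum X * msum Y"
proof -
  have "msum (X ** Y) = (\<Sum>i\<in>UNIV. \<Sum>k\<in>UNIV. norm (\<Sum>j\<in>UNIV. X$i$j * Y$j$k))"
    by (simp add: msum_def matrix_matrix_mult_def)
  also have "\<dots> \<le> (\<Sum>i\<in>UNIV. \<Sum>k\<in>UNIV. \<Sum>j\<in>UNIV. norm (X$i$j) * norm (Y$j$k))"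
    by (intro sum_mono order_trans[OF norm_sum]) (simp add: norm_mult)
  also have "\<dots> = (\<Sum>i\<in>UNIV. \<Sum>j\<in>UNIV. norm (X$i$j) * (\<Sum>k\<in>UNIV. norm (Y$j$k)))"
  proof (intro sum.cong refl)
    fix i
    show "(\<Sum>k\<in>UNIV. \<Sum>j\<in>UNIV. norm (X$i$j) * norm (Y$j$k)) = (\<Sum>j\<in>UNIV. norm (X$i$j) * (\<Sum>k\<in>UNIV. norm (Y$j$k)))"
      unfolding sum_distrib_left by (rule sum.swap)
  qed
  also have "\<dots> \<le> (\<Sum>i\<in>UNIV. \<Sum>j\<in>UNIV. norm (X$i$j) * msum Y)"
    by (intro sum_mono mult_left_mono row_le_msum) auto
  also have "\<dots> = msum X * msum Y"
    by (simp add: msum_def sum_distrib_right)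
  finally show ?thesis .
qed

lemma vsum1_mult: "vsum1 (X *v y) \<le> msum X * vsum1 y"
proof -
  have "vsum1 (X *v y) = (\<Sum>i\<in>UNIV. norm (\<Sum>j\<in>UNIV. X$i$j * y$j))"
    by (simp add: vsum1_def matrix_vector_mult_def)
  also have "\<dots> \<le> (\<Sum>i\<in>UNIV. \<Sum>j\<in>UNIV. norm (X$i$j) * norm (y$j))"
    by (intro sum_mono order_trans[OF norm_sum]) (simp add: norm_mult)
  also have "\<dots> \<le> (\<Sum>i\<in>UNIV. \<Sum>j\<in>UNIV. norm (X$i$j) * vsum1 y)"
    by (intro sum_mono mult_left_mono entry_le_vsum1) auto
  also have "\<dots> = msum X * vsum1 y"
    by (simp add: msum_def sum_distrib_right)
  finally show ?thesis .
qed

lemma msum_add: "msum (X + Y) \<le> msum X + msum Y"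
  unfolding msum_def by (simp add: sum.distrib[symmetric] sum_mono norm_triangle_ineq)

lemma msum_mat1: "msum (mat 1 :: complex^'a^'a) = real CARD('a)"
  by (simp add: msum_def mat_def of_bool_def if_distrib cong: if_cong)

lemma mat_mult_entry: "(mat a ** A) $ i $ j = a * A $ i $ j"
  by (simp add: matrix_matrix_mult_def mat_def if_distrib if_distribR cong: if_cong)

lemma msum_mat_mult: "msum (mat a ** (A::complex^'b^'a)) = norm a * msum A"
  by (simp add: msum_def mat_mult_entry norm_mult sum_distrib_left)

lemma mm_diff_right: "((A::'x::comm_ring_1^'b^'a) - B) ** C = A ** C - B ** C"
  by (simp add: matrix_matrix_mult_def vec_eq_iff sum_subtractf algebra_simps)

lemma mm_diff_left: "(C::'x::comm_ring_1^'b^'a) ** (A - B) = C ** A - C ** B"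
  by (simp add: matrix_matrix_mult_def vec_eq_iff sum_subtractf algebra_simps)

lemma mm_add_right: "((A::'x::comm_ring_1^'b^'a) + B) ** C = A ** C + B ** C"
  by (simp add: matrix_matrix_mult_def vec_eq_iff sum.distrib algebra_simps)

lemma matrix_inv_props:
  assumes "invertible M"
  shows "M ** matrix_inv M = mat 1" "matrix_inv M ** M = mat 1"
proof -
  from assms obtain B where "M ** B = mat 1 \<and> B ** M = mat 1" unfolding invertible_def by blast
  then have "M ** matrix_inv M = mat 1 \<and> matrix_inv M ** M = mat 1"
    unfolding matrix_inv_def by (rule someI)
  then show "M ** matrix_inv M = mat 1" "matrix_inv M ** M = mat 1" by auto
qed

lemma neumann:
  fixes X :: "complex^'a^'a"
  assumes "msum X \<le> 1/2"
  shows "invertible (mat 1 - X)" "msum (matrix_inv (mat 1 - X)) \<le> 2 * real CARD('a)"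
proof -
  have inj: "y = 0" if "(mat 1 - X) *v y = 0" for y
  proof -
    have "y = X *v y" using that by (simp add: matrix_vector_mult_diff_rdistrib)
    then have "vsum1 y \<le> msum X * vsum1 y" by (metis vsum1_mult)
    also have "\<dots> \<le> 1/2 * vsum1 y" by (intro mult_right_mono assms vsum1_nonneg)
    finally have "vsum1 y = 0" using vsum1_nonneg[of y] by linarith
    then show "y = 0"
      by (metis entry_le_vsum1 norm_le_zero_iff vec_eq_iff zero_index)
  qed
  show inv: "invertible (mat 1 - X)"
    using inj by (simp add: invertible_left_inverse matrix_left_invertible_ker)
  define Y where "Y = matrix_inv (mat 1 - X)"
  have "(mat 1 - X) ** Y = mat 1" using matrix_inv_props(1)[OF inv] by (simp add: Y_def)
  then have "Y - X ** Y = mat 1" by (simp add: mm_diff_right)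
  then have "Y = mat 1 + X ** Y" by (metis diff_add_cancel)
  then have "msum Y \<le> msum (mat 1 :: complex^'a^'a) + msum (X ** Y)"
    by (metis msum_add)
  also have "\<dots> \<le> msum (mat 1 :: complex^'a^'a) + msum X * msum Y"
    by (intro add_left_mono msum_mult)
  also have "\<dots> \<le> real CARD('a) + 1/2 * msum Y"
    using mult_right_mono[OF assms msum_nonneg[of Y]] by (simp add: msum_mat1)
  finally show "msum (matrix_inv (mat 1 - X)) \<le> 2 * real CARD('a)" unfolding Y_def[symmetric] by linarith
qed


lemma mat_mult_entry_right: "(A ** mat a) $ i $ j = A $ i $ j * a"
  by (simp add: matrix_matrix_mult_def mat_def if_distrib if_distribR cong: if_cong)

lemma commute_mat: "(X::complex^'a^'a) ** mat w = mat w ** X"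
  by (simp add: vec_eq_iff mat_mult_entry mat_mult_entry_right mult.commute)

lemma commM:
  fixes X A :: "complex^'a^'a"
  assumes "X ** A = A ** X"
  shows "X ** (mat 1 - mat w ** A) = (mat 1 - mat w ** A) ** X"
proof -
  have "X ** (mat w ** A) = (X ** mat w) ** A" by (simp add: matrix_mul_assoc)
  also have "\<dots> = mat w ** (X ** A)" by (simp add: commute_mat matrix_mul_assoc)
  also have "\<dots> = (mat w ** A) ** X" by (simp add: assms matrix_mul_assoc)
  finally show ?thesis by (simp add: mm_diff_left mm_diff_right)
qed

lemma comm_inv:
  fixes X M :: "complex^'a^'a"
  assumes inv: "invertible M" and c: "X ** M = M ** X"
  shows "X ** matrix_inv M = matrix_inv M ** X"
proof -
  note r = matrix_inv_props[OF inv]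
  have "matrix_inv M ** X = matrix_inv M ** X ** (M ** matrix_inv M)" by (simp add: r)
  also have "\<dots> = matrix_inv M ** (X ** M) ** matrix_inv M" by (simp add: matrix_mul_assoc)
  also have "\<dots> = (matrix_inv M ** M) ** X ** matrix_inv M" by (simp add: c matrix_mul_assoc)
  also have "\<dots> = X ** matrix_inv M" by (simp add: r)
  finally show ?thesis by simp
qed

lemma conv_of_diff:
  fixes f :: "nat \<Rightarrow> complex"
  assumes b: "\<And>m. norm (f (Suc m) - f m) \<le> C * q ^ m" and q: "0 \<le> q" "q < 1"
  shows "convergent f"
proof -
  have sg: "summable (\<lambda>m. C * q ^ m)"
    using q by (intro summable_mult summable_geometric) auto
  have sd: "summable (\<lambda>m. f (Suc m) - f m)"
    by (rule summable_comparison_test'[OF sg b])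
  have "(\<lambda>m. f 0 + (\<Sum>n<m. f (Suc n) - f n)) \<longlonglongrightarrow> f 0 + (\<Sum>m. f (Suc m) - f m)"
    by (intro tendsto_add tendsto_const summable_LIMSEQ sd)
  then have "f \<longlonglongrightarrow> f 0 + (\<Sum>m. f (Suc m) - f m)"
    by (simp add: sum_lessThan_telescope)
  then show ?thesis by (rule convergentI)
qed

lemma mat_conv:
  fixes P :: "nat \<Rightarrow> complex^'b^'a"
  assumes b: "\<And>m. msum (P (Suc m) - P m) \<le> C * q ^ m" and q: "0 \<le> q" "q < 1"
  shows "\<exists>L. P \<longlonglongrightarrow> L"
proof -
  have cv: "convergent (\<lambda>m. P m $ i $ j)" for i j
  proof (rule conv_of_diff[OF _ q])
    fix m
    have "norm (P (Suc m) $ i $ j - P m $ i $ j) = norm ((P (Suc m) - P m) $ i $ j)" by simp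
    also have "\<dots> \<le> C * q ^ m" by (rule order_trans[OF entry_le_msum b])
    finally show "norm (P (Suc m) $ i $ j - P m $ i $ j) \<le> C * q ^ m" .
  qed
  define L where "L = (\<chi> i j. lim (\<lambda>m. P m $ i $ j))"
  have "P \<longlonglongrightarrow> L"
  proof (rule vec_tendstoI, rule vec_tendstoI)
    fix i j
    show "(\<lambda>m. P m $ i $ j) \<longlonglongrightarrow> L $ i $ j"
      using cv[of i j] by (simp add: L_def convergent_LIMSEQ_iff)
  qed
  then show ?thesis by blast
qed

lemma step_bound:
  fixes X P :: "complex^'a^'a"
  assumes inv: "invertible (mat 1 - X)" and s: "msum X \<le> 1/2"
  shows "msum (P ** matrix_inv (mat 1 - X) - P) \<le> msum P * (msum X * (2 * real CARD('a)))"
proof -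
  define Y where "Y = matrix_inv (mat 1 - X)"
  have "(mat 1 - X) ** Y = mat 1" using matrix_inv_props(1)[OF inv] by (simp add: Y_def)
  then have "Y - X ** Y = mat 1" by (simp add: mm_diff_right)
  then have "Y = mat 1 + X ** Y" by (metis diff_add_cancel)
  then have "P ** Y - P = P ** (X ** Y)"
    by (metis add_diff_cancel_left' matrix_add_ldistrib matrix_mul_rid)
  then have "msum (P ** Y - P) \<le> msum P * msum (X ** Y)" by (metis msum_mult)
  also have "\<dots> \<le> msum P * (msum X * msum Y)"
    by (intro mult_left_mono msum_mult msum_nonneg)
  also have "\<dots> \<le> msum P * (msum X * (2 * real CARD('a)))"
    using neumann(2)[OF s] by (intro mult_left_mono msum_nonneg) (auto simp: Y_def msum_nonneg)
  finally show ?thesis by (simp add: Y_def)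
qed

lemma geom_sum_bound:
  fixes q :: real
  shows "(1 - q) * (\<Sum>j<m. q ^ j) = 1 - q ^ m"
proof (induction m)
  case (Suc m)
  have "(1 - q) * (\<Sum>j<Suc m. q ^ j) = (1 - q) * (\<Sum>j<m. q ^ j) + (1 - q) * q ^ m"
    by (simp add: distrib_left)
  also have "\<dots> = 1 - q ^ Suc m" using Suc by (simp add: algebra_simps)
  finally show ?case .
qed simp


theorem proposition2p2:
  fixes q :: real and r :: real
    and F :: "complex \<Rightarrow> complex ^'N ^'n"
  assumes q: "0 \<le> q" "q < 1"
    and r: "r > 0"
    and analytic: "\<And>i k. (\<lambda>z. F z $ i $ k) analytic_on ball 0 r"
    and basis_indep: "\<And>c :: complex ^'N.
           (\<forall>z\<in>ball 0 r. (\<chi> i. \<Sum>k\<in>UNIV. c $ k * F z $ i $ k) = 0) \<Longrightarrow> c = 0"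
    and invariant: "\<And>k. \<exists>c :: complex ^'N. \<forall>z\<in>ball 0 r.
           jackson_R_vec q (\<lambda>w. \<chi> i. F w $ i $ k) z = (\<chi> i. \<Sum>j\<in>UNIV. c $ j * F z $ i $ j)"
  shows "\<exists>A :: complex ^'N ^'N. \<exists>\<epsilon> > 0. \<forall>z\<in>ball 0 \<epsilon>.
           (\<forall>m. invertible (mat 1 - mat ((1 - complex_of_real q) * z * complex_of_real q ^ m) ** A)) \<and>
           (\<exists>P. qprod_partial q A z \<longlonglongrightarrow> P \<and> F z = F 0 ** P)"
proof -
  have "\<forall>k. \<exists>c :: complex ^'N. \<forall>z\<in>ball 0 r.
           jackson_R_vec q (\<lambda>w. \<chi> i. F w $ i $ k) z = (\<chi> i. \<Sum>j\<in>UNIV. c $ j * F z $ i $ j)"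
    using invariant by blast
  from choice[OF this] obtain c :: "'N \<Rightarrow> complex^'N" where c0: "\<forall>k. \<forall>z\<in>ball 0 r.
      jackson_R_vec q (\<lambda>w. \<chi> i. F w $ i $ k) z = (\<chi> i. \<Sum>j\<in>UNIV. c k $ j * F z $ i $ j)"
    by blast
  have c: "\<And>k z. z \<in> ball 0 r \<Longrightarrow>
      jackson_R_vec q (\<lambda>w. \<chi> i. F w $ i $ k) z = (\<chi> i. \<Sum>j\<in>UNIV. c k $ j * F z $ i $ j)"
    using c0 by blast
  define A :: "complex^'N^'N" where "A = (\<chi> j k. c k $ j)"
  define M :: "complex \<Rightarrow> complex^'N^'N" where "M w = mat 1 - mat w ** A" for w
  have FM: "(G ** M w) $ i $ k = G $ i $ k - w * (\<Sum>j\<in>UNIV. G $ i $ j * c k $ j)"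
    for G :: "complex^'N^'n" and w i k
  proof -
    have "G ** M w = G - G ** (mat w ** A)" by (simp add: M_def mm_diff_left)
    moreover have "(G ** (mat w ** A)) $ i $ k = (\<Sum>j\<in>UNIV. G $ i $ j * (mat w ** A) $ j $ k)"
      by (simp only: matrix_matrix_mult_def[of G] vec_lambda_beta)
    moreover have "\<dots> = w * (\<Sum>j\<in>UNIV. G $ i $ j * c k $ j)"
      by (simp add: mat_mult_entry A_def sum_distrib_left mult_ac)
    ultimately show ?thesis by simp
  qed
  have feq: "F (complex_of_real q * z) = F z ** M ((1 - complex_of_real q) * z)"
    if z: "z \<in> ball 0 r" for z
  proof (cases "z = 0")
    case True
    then show ?thesis by (simp add: M_def)
  next
    case False
    have nz: "(1 - complex_of_real q) * z \<noteq> 0" using False q by auto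
    show ?thesis
    proof (subst vec_eq_iff, intro allI, subst vec_eq_iff, intro allI)
      fix i k
      have "jackson_R_vec q (\<lambda>w. \<chi> i. F w $ i $ k) z $ i = (\<chi> i. \<Sum>j\<in>UNIV. c k $ j * F z $ i $ j) $ i"
        using c[OF z] by simp
      then have "(F z $ i $ k - F (complex_of_real q * z) $ i $ k) / ((1 - complex_of_real q) * z)
           = (\<Sum>j\<in>UNIV. c k $ j * F z $ i $ j)"
        using False by (simp add: jackson_R_vec_def jackson_R_def)
      then have "F z $ i $ k - F (complex_of_real q * z) $ i $ k = (1 - complex_of_real q) * z * (\<Sum>j\<in>UNIV. c k $ j * F z $ i $ j)"
        using nz by (simp add: divide_eq_eq mult_ac)
      then show "F (complex_of_real q * z) $ i $ k = (F z ** M ((1 - complex_of_real q) * z)) $ i $ k"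
        by (simp add: FM mult_ac eq_diff_eq diff_eq_eq add.commute)
    qed
  qed
  define K where "K = msum A"
  have K0: "K \<ge> 0" by (simp add: K_def msum_nonneg)
  define \<epsilon> where "\<epsilon> = min r (1 / (2 * (K + 1)))"
  have eps: "\<epsilon> > 0" using r K0 by (simp add: \<epsilon>_def)
  have "\<forall>z\<in>ball 0 \<epsilon>.
           (\<forall>m. invertible (mat 1 - mat ((1 - complex_of_real q) * z * complex_of_real q ^ m) ** A)) \<and>
           (\<exists>P. qprod_partial q A z \<longlonglongrightarrow> P \<and> F z = F 0 ** P)"
  proof
    fix z :: complex
    assume z: "z \<in> ball 0 \<epsilon>"
    have zr: "norm z < r" and zK: "norm z < 1 / (2 * (K + 1))" using z by (auto simp: \<epsilon>_def)
    define a where "a m = (1 - complex_of_real q) * z * complex_of_real q ^ m" for m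
    have n1q: "norm (1 - complex_of_real q) = 1 - q"
    proof -
      have e: "1 - complex_of_real q = complex_of_real (1 - q)" by simp
      show ?thesis unfolding e norm_of_real using q by simp
    qed
    have na: "norm (a m) = (1 - q) * norm z * q ^ m" for m
      using q by (simp add: a_def norm_mult norm_power n1q)
    have na_le: "norm (a m) \<le> norm z" for m
    proof -
      have "(1 - q) * norm z * q ^ m \<le> 1 * norm z * 1"
        using q by (intro mult_mono power_le_one) auto
      then show ?thesis by (simp add: na)
    qed
    have small: "msum (mat (a m) ** A) \<le> 1/2" for m
    proof -
      have "msum (mat (a m) ** A) = norm (a m) * K" by (simp add: msum_mat_mult K_def)
      also have "\<dots> \<le> (1 / (2 * (K + 1))) * K"
        using na_le[of m] zK K0 by (intro mult_right_mono) auto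
      also have "\<dots> \<le> 1/2" using K0 by (simp add: field_simps)
      finally show ?thesis .
    qed
    have inv: "invertible (M (a m))" for m
      unfolding M_def by (rule neumann(1)[OF small])
    define P where "P m = qprod_partial q A z m" for m
    have Psuc: "P (Suc m) = P m ** matrix_inv (M (a m))" for m
      by (simp add: P_def M_def a_def)
    have commA: "P m ** A = A ** P m" for m
    proof (induction m)
      case 0 then show ?case by (simp add: P_def)
    next
      case (Suc m)
      have "A ** M (a m) = M (a m) ** A" unfolding M_def by (rule commM) simp
      then have ci: "A ** matrix_inv (M (a m)) = matrix_inv (M (a m)) ** A"
        by (rule comm_inv[OF inv])
      have "P (Suc m) ** A = P m ** (matrix_inv (M (a m)) ** A)"
        by (simp add: Psuc matrix_mul_assoc)
      also have "\<dots> = (P m ** A) ** matrix_inv (M (a m))"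
        unfolding ci[symmetric] by (rule matrix_mul_assoc)
      also have "\<dots> = A ** P (Suc m)"
        by (simp add: Suc Psuc matrix_mul_assoc)
      finally show ?case .
    qed
    have key: "F z = F (complex_of_real q ^ m * z) ** P m" for m
    proof (induction m)
      case 0 then show ?case by (simp add: P_def)
    next
      case (Suc m)
      define w where "w = complex_of_real q ^ m * z"
      have wr: "w \<in> ball 0 r"
      proof -
        have "norm w = q ^ m * norm z" using q by (simp add: w_def norm_mult norm_power)
        also have "\<dots> \<le> 1 * norm z" using q by (intro mult_right_mono power_le_one) auto
        finally show ?thesis using zr by simp
      qed
      have aw: "(1 - complex_of_real q) * w = a m" by (simp add: w_def a_def mult_ac)
      have fw: "F (complex_of_real q ^ Suc m * z) = F w ** M (a m)"
      proof -
        have "F (complex_of_real q * w) = F w ** M (a m)" using feq[OF wr] unfolding aw .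
        moreover have "complex_of_real q * w = complex_of_real q ^ Suc m * z" by (simp add: w_def)
        ultimately show ?thesis by simp
      qed
      have fw2: "F w = F (complex_of_real q ^ Suc m * z) ** matrix_inv (M (a m))"
      proof -
        have h: "F w ** M (a m) ** matrix_inv (M (a m)) = F w"
          by (simp add: matrix_mul_assoc[symmetric] matrix_inv_props[OF inv])
        show ?thesis unfolding fw by (rule sym[OF h])
      qed
      have "P m ** M (a m) = M (a m) ** P m" unfolding M_def by (rule commM[OF commA])
      then have cP: "P m ** matrix_inv (M (a m)) = matrix_inv (M (a m)) ** P m"
        by (rule comm_inv[OF inv])
      have "F z = F w ** P m" using Suc by (simp add: w_def)
      also have "\<dots> = F (complex_of_real q ^ Suc m * z) ** P (Suc m)"
        by (simp add: fw2 Psuc cP matrix_mul_assoc)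
      finally show ?case .
    qed
    define N where "N = real CARD('N)"
    define cc where "cc = 2 * N * K"
    have cc0: "cc \<ge> 0" using K0 by (simp add: cc_def N_def)
    have diffb: "msum (P (Suc m) - P m) \<le> msum (P m) * (cc * norm (a m))" for m
    proof -
      have "msum (P (Suc m) - P m) \<le> msum (P m) * (msum (mat (a m) ** A) * (2 * N))"
        unfolding Psuc M_def N_def by (rule step_bound[OF inv[unfolded M_def] small])
      also have "\<dots> = msum (P m) * (cc * norm (a m))"
        by (simp add: msum_mat_mult K_def cc_def mult_ac)
      finally show ?thesis .
    qed
    have Pb: "msum (P m) \<le> N * exp (cc * (\<Sum>j<m. norm (a j)))" for m
    proof (induction m)
      case 0 then show ?case by (simp add: P_def msum_mat1 N_def)
    next
      case (Suc m)
      have "P (Suc m) = P m + (P (Suc m) - P m)" by simp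
      then have "msum (P (Suc m)) \<le> msum (P m) + msum (P (Suc m) - P m)" by (metis msum_add)
      also have "\<dots> \<le> msum (P m) * (1 + cc * norm (a m))"
        using diffb[of m] by (simp add: algebra_simps)
      also have "\<dots> \<le> N * exp (cc * (\<Sum>j<m. norm (a j))) * exp (cc * norm (a m))"
        using Suc cc0 by (intro mult_mono) (auto simp: msum_nonneg add_nonneg_nonneg N_def)
      also have "\<dots> = N * exp (cc * (\<Sum>j<Suc m. norm (a j)))"
        by (simp add: exp_add[symmetric] distrib_left)
      finally show ?case .
    qed
    have Sb: "(\<Sum>j<m. norm (a j)) \<le> norm z" for m
    proof -
      have "(\<Sum>j<m. norm (a j)) = norm z * ((1 - q) * (\<Sum>j<m. q ^ j))"
        by (simp add: na sum_distrib_left mult_ac)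
      also have "\<dots> = norm z * (1 - q ^ m)" by (simp add: geom_sum_bound)
      also have "\<dots> \<le> norm z * 1" using q by (intro mult_left_mono) auto
      finally show ?thesis by simp
    qed
    define B where "B = N * exp (cc * norm z)"
    have PB: "msum (P m) \<le> B" for m
    proof -
      have "N * exp (cc * (\<Sum>j<m. norm (a j))) \<le> B"
        unfolding B_def using Sb[of m] cc0 by (intro mult_left_mono) (auto simp: N_def intro: mult_left_mono)
      then show ?thesis using Pb[of m] by linarith
    qed
    have "\<exists>L. P \<longlonglongrightarrow> L"
    proof (rule mat_conv[OF _ q])
      fix m
      have "msum (P (Suc m) - P m) \<le> msum (P m) * (cc * norm (a m))" by (rule diffb)
      also have "\<dots> \<le> B * (cc * norm (a m))"
        using PB cc0 by (intro mult_right_mono) auto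
      also have "\<dots> = (B * cc * (1 - q) * norm z) * q ^ m" by (simp add: na mult_ac)
      finally show "msum (P (Suc m) - P m) \<le> (B * cc * (1 - q) * norm z) * q ^ m" .
    qed
    then obtain L where L: "P \<longlonglongrightarrow> L" by blast
    have Fz: "F z = F 0 ** L"
    proof (subst vec_eq_iff, intro allI, subst vec_eq_iff, intro allI)
      fix i k
      have qz: "(\<lambda>m. complex_of_real q ^ m * z) \<longlonglongrightarrow> 0"
        using q by (intro tendsto_mult_left_zero LIMSEQ_power_zero) auto
      have cont: "isCont (\<lambda>z. F z $ i $ j) 0" for j
        using analytic_on_imp_differentiable_at[OF analytic, of 0] r
        by (intro field_differentiable_imp_continuous_at) auto
      have "(\<lambda>m. (\<Sum>j\<in>UNIV. F (complex_of_real q ^ m * z) $ i $ j * P m $ j $ k))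
              \<longlonglongrightarrow> (\<Sum>j\<in>UNIV. F 0 $ i $ j * L $ j $ k)"
        by (intro tendsto_sum tendsto_mult isCont_tendsto_compose[OF cont qz] tendsto_vec_nth L)
      moreover have "(\<Sum>j\<in>UNIV. F (complex_of_real q ^ m * z) $ i $ j * P m $ j $ k) = F z $ i $ k" for m
      proof -
        have "F z $ i $ k = (F (complex_of_real q ^ m * z) ** P m) $ i $ k" using key[of m] by simp
        then show ?thesis by (simp add: matrix_matrix_mult_def)
      qed
      ultimately have "(\<lambda>m. F z $ i $ k) \<longlonglongrightarrow> (F 0 ** L) $ i $ k"
        by (simp add: matrix_matrix_mult_def)
      then show "F z $ i $ k = (F 0 ** L) $ i $ k"
        using LIMSEQ_unique tendsto_const by blast
    qed
    show "(\<forall>m. invertible (mat 1 - mat ((1 - complex_of_real q) * z * complex_of_real q ^ m) ** A)) \<and>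
           (\<exists>P. qprod_partial q A z \<longlonglongrightarrow> P \<and> F z = F 0 ** P)"
      using inv L Fz unfolding M_def a_def P_def by blast
  qed
  then show ?thesis using eps by blast
qed

end
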